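(* Let $n,t,t'$ be positive integers with $t-1\ge t'$. Then $$R(\mathcal{C}_{t,t-1,t'},Q_n)=n+t+2.$$
   Context: $C_t$ denotes a chain on $t$ elements. The parallel composition $P_1+P_2+P_3$ of posets is the disjoint union of copies of $P_1,P_2,P_3$ where elements of different copies are incomparable. $\mathcal{C}_{t_1,t_2,t_3}=C_{t_1}+C_{t_2}+C_{t_3}$. $Q_n$ is the Boolean lattice of all subsets of an $n$-element set ordered by inclusion. A copy of $P$ in $Q$ is an induced subposet of $Q$ isomorphic to $P$. $R(P_1,P_2)$ is the smallest integer $N$ such that every blue/red coloring of the elements of $Q_N$ contains an all-blue copy of $P_1$ or an all-red copy of $P_2$. *)

theory Defs
  imports Main
begin

type_synonym 'a poset = "'a set \<times> ('a \<Rightarrow> 'a \<Rightarrow> bool)"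

definition copy_in :: "'a poset \<Rightarrow> nat set set \<Rightarrow> bool" where
  "copy_in P S \<longleftrightarrow> (\<exists>f. inj_on f (fst P) \<and> f ` (fst P) \<subseteq> S \<and>
      (\<forall>x\<in>fst P. \<forall>y\<in>fst P. snd P x y \<longleftrightarrow> f x \<subseteq> f y))"

definition boolean_lattice :: "nat \<Rightarrow> nat set poset" where
  "boolean_lattice n = (Pow {..<n}, (\<subseteq>))"

definition chain_sum3 :: "nat \<Rightarrow> nat \<Rightarrow> nat \<Rightarrow> (nat \<times> nat) poset" where
  "chain_sum3 t1 t2 t3 =
     ({(i, j). (i = 0 \<and> j < t1) \<or> (i = 1 \<and> j < t2) \<or> (i = 2 \<and> j < t3)},
      (\<lambda>(i, j) (i', j'). i = i' \<and> j \<le> j'))"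

text \<open>Poset Ramsey number R(P1,P2): least N such that every blue/red colouring of Q_N
  (blue = c A true) contains a blue copy of P1 or a red copy of P2.\<close>
definition ramsey_num :: "'a poset \<Rightarrow> 'b poset \<Rightarrow> nat" where
  "ramsey_num P1 P2 = (LEAST N. \<forall>c :: nat set \<Rightarrow> bool.
      copy_in P1 {A. A \<subseteq> {..<N} \<and> c A} \<or> copy_in P2 {A. A \<subseteq> {..<N} \<and> \<not> c A})"

end

theory Submission
  imports Defs
begin

lemma chain_lemma:
  fixes col :: "nat set \<Rightarrow> bool" and W :: "nat set" and n k N :: nat
  assumes Wdisj: "W \<inter> {..<n+k} = {}" and WN: "W \<subseteq> {..<N}" and nkN: "n+k \<le> N"
  shows "(\<exists>h. (\<forall>j<Suc k. col (h j) \<and> W \<subseteq> h j \<and> h j \<subseteq> W \<union> {..<n+k}) \<and>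
              (\<forall>j j'. j < j' \<and> j' < Suc k \<longrightarrow> h j \<subset> h j'))
         \<or> copy_in (boolean_lattice n) {A. A \<subseteq> {..<N} \<and> \<not> col A}" (is "?C \<or> ?R")
proof (cases ?C)
  case True then show ?thesis by blast
next
  case False
  then have nochain: "\<not> (\<exists>h. (\<forall>j<Suc k. col (h j) \<and> W \<subseteq> h j \<and> h j \<subseteq> W \<union> {..<n+k}) \<and>
              (\<forall>j j'. j < j' \<and> j' < Suc k \<longrightarrow> h j \<subset> h j'))" by blast
  define M where "M S = {m::nat. \<exists>h. (\<forall>j<m. col (h j) \<and> W \<subseteq> h j \<and> h j \<subseteq> S) \<and>
              (\<forall>j j'. j < j' \<and> j' < m \<longrightarrow> h j \<subset> h j')}" for S
  define g where "g S = Max (M S)" for S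
  have Mbound: "M S \<subseteq> {..k}" if SB: "S \<subseteq> W \<union> {..<n+k}" for S
  proof
    fix m assume "m \<in> M S"
    then obtain h where h1: "\<forall>j<m. col (h j) \<and> W \<subseteq> h j \<and> h j \<subseteq> S"
      and h2: "\<forall>j j'. j < j' \<and> j' < m \<longrightarrow> h j \<subset> h j'" by (auto simp: M_def)
    show "m \<in> {..k}"
    proof (rule ccontr)
      assume "m \<notin> {..k}" hence mk: "Suc k \<le> m" by simp
      have "(\<forall>j<Suc k. col (h j) \<and> W \<subseteq> h j \<and> h j \<subseteq> W \<union> {..<n+k}) \<and>
              (\<forall>j j'. j < j' \<and> j' < Suc k \<longrightarrow> h j \<subset> h j')"
      proof (rule conjI; intro allI impI)
        fix j assume "j < Suc k"
        then have "j < m" using mk by simp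
        with h1 SB show "col (h j) \<and> W \<subseteq> h j \<and> h j \<subseteq> W \<union> {..<n+k}" by blast
      next
        fix j j' assume "j < j' \<and> j' < Suc k"
        with mk h2 show "h j \<subset> h j'" by auto
      qed
      with nochain show False by blast
    qed
  qed
  have M0: "0 \<in> M S" for S by (auto simp: M_def)
  have finM: "finite (M S)" if "S \<subseteq> W \<union> {..<n+k}" for S
    using Mbound[OF that] finite_subset by blast
  have gM: "g S \<in> M S" if "S \<subseteq> W \<union> {..<n+k}" for S
    unfolding g_def using finM[OF that] M0 by (intro Max_in) auto
  have gk: "g S \<le> k" if "S \<subseteq> W \<union> {..<n+k}" for S
    using gM[OF that] Mbound[OF that] by auto
  have gmono: "g S \<le> g S'" if "S \<subseteq> S'" "S' \<subseteq> W \<union> {..<n+k}" for S S'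
  proof -
    have "M S \<subseteq> M S'" unfolding M_def using that(1) by blast
    then show ?thesis unfolding g_def using M0 finM[OF that(2)] by (intro Max_mono) auto
  qed
  have gstep: "g S' + 1 \<le> g S" if a: "col S" "W \<subseteq> S" "S' \<subset> S" "S \<subseteq> W \<union> {..<n+k}" for S S'
  proof -
    have S'b: "S' \<subseteq> W \<union> {..<n+k}" using a by auto
    from gM[OF S'b] obtain h where h1: "\<forall>j<g S'. col (h j) \<and> W \<subseteq> h j \<and> h j \<subseteq> S'"
      and h2: "\<forall>j j'. j < j' \<and> j' < g S' \<longrightarrow> h j \<subset> h j'" unfolding M_def by blast
    define h' where "h' = h(g S' := S)"
    have "(\<forall>j<Suc (g S'). col (h' j) \<and> W \<subseteq> h' j \<and> h' j \<subseteq> S) \<and>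
              (\<forall>j j'. j < j' \<and> j' < Suc (g S') \<longrightarrow> h' j \<subset> h' j')"
    proof (rule conjI; intro allI impI)
      fix j assume j: "j < Suc (g S')"
      show "col (h' j) \<and> W \<subseteq> h' j \<and> h' j \<subseteq> S"
      proof (cases "j = g S'")
        case True then show ?thesis using a by (simp add: h'_def)
      next
        case False then have jl: "j < g S'" using j by simp
        then have "col (h j) \<and> W \<subseteq> h j \<and> h j \<subseteq> S'" using h1 by blast
        then show ?thesis using a False by (auto simp: h'_def)
      qed
    next
      fix j j' assume jj: "j < j' \<and> j' < Suc (g S')"
      show "h' j \<subset> h' j'"
      proof (cases "j' = g S'")
        case True
        then have "j < g S'" using jj by simp
        then have "h j \<subseteq> S'" using h1 by blast
        then show ?thesis using a True jj by (auto simp: h'_def)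
      next
        case False
        then show ?thesis using h2 jj by (auto simp: h'_def)
      qed
    qed
    then have "Suc (g S') \<in> M S" unfolding M_def by blast
    then show ?thesis unfolding g_def using finM[OF a(4)] by (simp add: Max_ge)
  qed
  have gpos: "1 \<le> g S" if a: "col S" "W \<subseteq> S" "S \<subseteq> W \<union> {..<n+k}" for S
  proof -
    have "1 \<in> M S" unfolding M_def using a by (intro CollectI exI[of _ "\<lambda>_. S"]) auto
    then show ?thesis unfolding g_def using finM[OF a(3)] by (simp add: Max_ge)
  qed
  define Y where "Y j = {n..<n+j}" for j
  define T where "T X j = X \<union> W \<union> Y j" for X j
  have Tb: "T X j \<subseteq> W \<union> {..<n+k}" if "X \<subseteq> {..<n}" "j \<le> k" for X j
    using that unfolding T_def Y_def by auto
  define idx where "idx X = (LEAST j. g (T X j) \<le> j)" for X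
  have idx_le: "idx X \<le> k" if "X \<subseteq> {..<n}" for X
    unfolding idx_def using gk[OF Tb[OF that order_refl]] by (rule Least_le)
  have idx_prop: "g (T X (idx X)) \<le> idx X" if "X \<subseteq> {..<n}" for X
    unfolding idx_def using gk[OF Tb[OF that order_refl]] by (rule LeastI)
  have red: "\<not> col (T X (idx X))" if X: "X \<subseteq> {..<n}" for X
  proof
    assume blue: "col (T X (idx X))"
    have WT: "W \<subseteq> T X j" for j unfolding T_def by auto
    have ib: "T X (idx X) \<subseteq> W \<union> {..<n+k}" using Tb[OF X idx_le[OF X]] .
    show False
    proof (cases "idx X = 0")
      case True
      with gpos[OF blue WT ib] idx_prop[OF X] show False by simp
    next
      case False
      define i where "i = idx X"
      have i0: "i > 0" using False i_def by simp
      have "\<not> g (T X (i-1)) \<le> i - 1"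
        unfolding i_def idx_def by (rule not_less_Least) (use i0 i_def idx_def in simp)
      moreover have "T X (i-1) \<subset> T X i"
      proof
        show "T X (i-1) \<subseteq> T X i" unfolding T_def Y_def by auto
        have "n + (i-1) \<in> T X i" unfolding T_def Y_def using i0 by auto
        moreover have "n + (i-1) \<notin> T X (i-1)"
        proof -
          have "i \<le> k" using idx_le[OF X] i_def by simp
          then have "n + (i-1) \<notin> W" using Wdisj i0 by auto
          then show ?thesis unfolding T_def Y_def using X by auto
        qed
        ultimately show "T X (i-1) \<noteq> T X i" by blast
      qed
      then have "g (T X (i-1)) + 1 \<le> g (T X i)"
        using gstep blue WT ib i_def by blast
      ultimately show False using idx_prop[OF X] i_def by simp
    qed
  qed
  have idx_mono: "idx X \<le> idx X'" if "X \<subseteq> X'" "X' \<subseteq> {..<n}" for X X'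
  proof -
    have "T X (idx X') \<subseteq> T X' (idx X')" unfolding T_def using that by auto
    then have "g (T X (idx X')) \<le> g (T X' (idx X'))"
      using gmono Tb[OF that(2) idx_le[OF that(2)]] by blast
    also have "\<dots> \<le> idx X'" using idx_prop[OF that(2)] .
    finally show ?thesis unfolding idx_def[of X] by (rule Least_le)
  qed
  define \<phi> where "\<phi> X = T X (idx X)" for X
  have inter: "\<phi> X \<inter> {..<n} = X" if "X \<subseteq> {..<n}" for X
    using that Wdisj unfolding \<phi>_def T_def Y_def by auto
  have ord: "X \<subseteq> X' \<longleftrightarrow> \<phi> X \<subseteq> \<phi> X'" if "X \<subseteq> {..<n}" "X' \<subseteq> {..<n}" for X X'
  proof
    assume "X \<subseteq> X'"
    then have "idx X \<le> idx X'" using idx_mono that by blast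
    then have "Y (idx X) \<subseteq> Y (idx X')" unfolding Y_def by auto
    then show "\<phi> X \<subseteq> \<phi> X'" unfolding \<phi>_def T_def using \<open>X \<subseteq> X'\<close> by auto
  next
    assume "\<phi> X \<subseteq> \<phi> X'"
    then have "\<phi> X \<inter> {..<n} \<subseteq> \<phi> X' \<inter> {..<n}" by blast
    then show "X \<subseteq> X'" using inter that by simp
  qed
  have ?R
    unfolding copy_in_def boolean_lattice_def fst_conv snd_conv
  proof (intro exI[of _ \<phi>] conjI ballI)
    show "inj_on \<phi> (Pow {..<n})"
    proof (rule inj_onI)
      fix X X' assume "X \<in> Pow {..<n}" "X' \<in> Pow {..<n}" "\<phi> X = \<phi> X'"
      then show "X = X'" using ord[of X X'] ord[of X' X] by auto
    qed
    show "\<phi> ` Pow {..<n} \<subseteq> {A. A \<subseteq> {..<N} \<and> \<not> col A}"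
    proof
      fix A assume "A \<in> \<phi> ` Pow {..<n}"
      then obtain X where X: "X \<subseteq> {..<n}" and A: "A = \<phi> X" by auto
      have "A \<subseteq> W \<union> {..<n+k}" using Tb[OF X idx_le[OF X]] A \<phi>_def by simp
      then have "A \<subseteq> {..<N}" using WN nkN by auto
      then show "A \<in> {A. A \<subseteq> {..<N} \<and> \<not> col A}" using red[OF X] A \<phi>_def by simp
    qed
  next
    fix X X' assume "X \<in> Pow {..<n}" "X' \<in> Pow {..<n}"
    then show "(X \<subseteq> X') = (\<phi> X \<subseteq> \<phi> X')" using ord by auto
  qed
then show ?thesis by blast
qed


lemma card_chain:
  fixes h :: "nat \<Rightarrow> nat set"
  assumes ch: "\<And>j. Suc j < m \<Longrightarrow> h j \<subset> h (Suc j)" and fin: "\<And>j. j < m \<Longrightarrow> finite (h j)"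
  shows "j + d < m \<Longrightarrow> card (h j) + d \<le> card (h (j+d))"
proof (induction d)
  case 0 show ?case by simp
next
  case (Suc d)
  then have "card (h j) + d \<le> card (h (j+d))" by simp
  moreover have "card (h (j+d)) < card (h (Suc (j+d)))"
    using ch fin Suc.prems by (intro psubset_card_mono) auto
  ultimately show ?case by simp
qed

lemma chains_to_copy:
  fixes H :: "nat \<Rightarrow> nat \<Rightarrow> nat set" and m t t' N :: nat and c :: "nat set \<Rightarrow> bool"
  assumes HB: "\<And>i j. i < 3 \<Longrightarrow> j < t \<Longrightarrow> c (H i j) \<and> {m+i} \<subseteq> H i j \<and> H i j \<subseteq> {m+i} \<union> {..<m}"
   and HS: "\<And>i j j'. i < 3 \<Longrightarrow> j < j' \<Longrightarrow> j' < t \<Longrightarrow> H i j \<subset> H i j'"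
   and mN: "m + 3 \<le> N" and tt: "t' \<le> t"
  shows "copy_in (chain_sum3 t (t-1) t') {A. A \<subseteq> {..<N} \<and> c A}"
proof -
  have ordH: "(i = i' \<and> j \<le> j') \<longleftrightarrow> H i j \<subseteq> H i' j'"
    if "i < 3" "i' < 3" "j < t" "j' < t" for i i' j j'
  proof (cases "i = i'")
    case True
    show ?thesis
    proof
      assume "i = i' \<and> j \<le> j'"
      then show "H i j \<subseteq> H i' j'" using HS[of i j j'] that by (cases "j = j'") auto
    next
      assume sub: "H i j \<subseteq> H i' j'"
      show "i = i' \<and> j \<le> j'"
      proof (rule ccontr)
        assume "\<not> (i = i' \<and> j \<le> j')"
        then have "j' < j" using True by simp
        then have "H i j' \<subset> H i j" using HS that by blast
        with sub True show False by blast
      qed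
    qed
  next
    case False
    have "m + i \<in> H i j" using HB[of i j] that by auto
    moreover have "m + i \<notin> H i' j'" using HB[of i' j'] that False by auto
    ultimately show ?thesis using False by blast
  qed
  have memb: "i < 3 \<and> j < t" if "(i, j) \<in> fst (chain_sum3 t (t-1) t')" for i j
    using that tt by (auto simp: chain_sum3_def)
  show ?thesis
    unfolding copy_in_def
  proof (intro exI[of _ "\<lambda>(i,j). H i j"] conjI ballI)
    fix x y assume x: "x \<in> fst (chain_sum3 t (t-1) t')" and y: "y \<in> fst (chain_sum3 t (t-1) t')"
    obtain i j where xe: "x = (i,j)" by (cases x)
    obtain i' j' where ye: "y = (i',j')" by (cases y)
    have a: "i < 3 \<and> j < t" "i' < 3 \<and> j' < t" using memb x y xe ye by auto
    have "snd (chain_sum3 t (t-1) t') (i,j) (i',j') = (i = i' \<and> j \<le> j')"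
      by (simp add: chain_sum3_def)
    then show "snd (chain_sum3 t (t-1) t') x y = ((\<lambda>(i,j). H i j) x \<subseteq> (\<lambda>(i,j). H i j) y)"
      using ordH[of i i' j j'] a xe ye by simp
  next
    show "inj_on (\<lambda>(i,j). H i j) (fst (chain_sum3 t (t-1) t'))"
    proof (rule inj_onI)
      fix x y assume x: "x \<in> fst (chain_sum3 t (t-1) t')" and y: "y \<in> fst (chain_sum3 t (t-1) t')"
        and eq: "(\<lambda>(i,j). H i j) x = (\<lambda>(i,j). H i j) y"
      obtain i j where xe: "x = (i,j)" by (cases x)
      obtain i' j' where ye: "y = (i',j')" by (cases y)
      have a: "i < 3 \<and> j < t" "i' < 3 \<and> j' < t" using memb x y xe ye by auto
      have "H i j = H i' j'" using eq xe ye by simp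
      then have "i = i' \<and> j \<le> j'" "i' = i \<and> j' \<le> j" using ordH[of i i' j j'] ordH[of i' i j' j] a by auto
      then show "x = y" using xe ye by simp
    qed
  next
    show "(\<lambda>(i,j). H i j) ` fst (chain_sum3 t (t-1) t') \<subseteq> {A. A \<subseteq> {..<N} \<and> c A}"
    proof
      fix A assume "A \<in> (\<lambda>(i,j). H i j) ` fst (chain_sum3 t (t-1) t')"
      then obtain i j where ij: "(i,j) \<in> fst (chain_sum3 t (t-1) t')" and A: "A = H i j" by auto
      have "i < 3 \<and> j < t" using memb ij by auto
      then have "c A \<and> A \<subseteq> {m+i} \<union> {..<m}" using HB A by auto
      moreover have "{m+i} \<union> {..<m} \<subseteq> {..<N}" using mN \<open>i < 3 \<and> j < t\<close> by auto
      ultimately show "A \<in> {A. A \<subseteq> {..<N} \<and> c A}" by auto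
    qed
  qed
qed

lemma no_red:
  "\<not> copy_in (boolean_lattice n) {A. A \<subseteq> {..<N} \<and> \<not> (card A \<le> 1 \<or> n+2 \<le> card A)}"
proof
  assume "copy_in (boolean_lattice n) {A. A \<subseteq> {..<N} \<and> \<not> (card A \<le> 1 \<or> n+2 \<le> card A)}"
  then obtain f where inj: "inj_on f (Pow {..<n})"
    and img: "f ` Pow {..<n} \<subseteq> {A. A \<subseteq> {..<N} \<and> \<not> (card A \<le> 1 \<or> n+2 \<le> card A)}"
    and ord: "\<forall>x\<in>Pow {..<n}. \<forall>y\<in>Pow {..<n}. x \<subseteq> y \<longleftrightarrow> f x \<subseteq> f y"
    unfolding copy_in_def boolean_lattice_def by auto
  define h where "h j = f {..<j}" for j
  have inP: "{..<j} \<in> Pow {..<n}" if "j \<le> n" for j using that by auto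
  have ch: "h j \<subset> h (Suc j)" if "Suc j < Suc n" for j
  proof
    have m1: "{..<j} \<in> Pow {..<n}" "{..<Suc j} \<in> Pow {..<n}" using inP that by auto
    have "{..<j} \<subseteq> {..<Suc j}" by auto
    then show "h j \<subseteq> h (Suc j)" unfolding h_def using ord[rule_format, OF m1] by simp
    have "{..<j} \<noteq> {..<Suc j}" by auto
    then show "h j \<noteq> h (Suc j)" unfolding h_def using inj_onD[OF inj _ m1] by blast
  qed
  have hin: "h j \<subseteq> {..<N} \<and> \<not> (card (h j) \<le> 1 \<or> n+2 \<le> card (h j))" if "j < Suc n" for j
  proof -
    have "f {..<j} \<in> f ` Pow {..<n}" using inP[of j] that by auto
    then show ?thesis using img unfolding h_def by blast
  qed
  have fin: "finite (h j)" if "j < Suc n" for j using hin[OF that] finite_subset by blast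
  have "card (h 0) + n \<le> card (h (0+n))"
    by (rule card_chain[of "Suc n" h]) (use ch fin in auto)
  moreover have "2 \<le> card (h 0)" using hin[of 0] by auto
  moreover have "card (h n) \<le> n+1" using hin[of n] by auto
  ultimately show False by simp
qed


lemma no_blue:
  fixes n t t' N :: nat
  assumes NB: "N \<le> n+t+1" and t2: "2 \<le> t" and t1: "1 \<le> t'"
  shows "\<not> copy_in (chain_sum3 t (t-1) t') {A. A \<subseteq> {..<N} \<and> (card A \<le> 1 \<or> n+2 \<le> card A)}"
proof
  let ?P = "chain_sum3 t (t-1) t'"
  let ?B = "{A. A \<subseteq> {..<N} \<and> (card A \<le> 1 \<or> n+2 \<le> card A)}"
  assume "copy_in ?P ?B"
  then obtain f where inj: "inj_on f (fst ?P)" and img: "f ` fst ?P \<subseteq> ?B"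
    and ord: "\<forall>x\<in>fst ?P. \<forall>y\<in>fst ?P. snd ?P x y \<longleftrightarrow> f x \<subseteq> f y"
    unfolding copy_in_def by blast
  have mem0: "(0,j) \<in> fst ?P" if "j < t" for j using that by (simp add: chain_sum3_def)
  have mem1: "(1,j) \<in> fst ?P" if "j < t - 1" for j using that by (simp add: chain_sum3_def)
  have mem2: "(2,0) \<in> fst ?P" using t1 by (simp add: chain_sum3_def)
  have rel: "f (i,j) \<subseteq> f (i',j') \<longleftrightarrow> (i = i' \<and> j \<le> j')"
    if "(i,j) \<in> fst ?P" "(i',j') \<in> fst ?P" for i j i' j'
    using ord[rule_format, OF that] by (simp add: chain_sum3_def)
  have blue: "f x \<subseteq> {..<N} \<and> (card (f x) \<le> 1 \<or> n+2 \<le> card (f x))" if "x \<in> fst ?P" for x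
    using img that by blast
  have fin: "finite (f x)" if "x \<in> fst ?P" for x using blue[OF that] finite_subset by blast
  have chs: "f (i,j) \<subset> f (i, Suc j)" if "(i,j) \<in> fst ?P" "(i,Suc j) \<in> fst ?P" for i j
  proof
    show "f (i,j) \<subseteq> f (i, Suc j)" using rel[OF that] by simp
    show "f (i,j) \<noteq> f (i, Suc j)" using inj_onD[OF inj _ that] by auto
  qed
  have cc0: "card (f (0,j)) + d \<le> card (f (0,j+d))" if "j + d < t" for j d
    by (rule card_chain[of t "\<lambda>j. f (0,j)"]) (use chs mem0 fin that in auto)
  have cc1: "card (f (1,j)) + d \<le> card (f (1,j+d))" if "j + d < t - 1" for j d
    by (rule card_chain[of "t-1" "\<lambda>j. f (1,j)"]) (use chs mem1 fin that in auto)
  define e where "e = f (2,0)"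
  define A0 where "A0 = f (0,0)"
  define Z where "Z = f (0,t-1)"
  define g where "g = f (1,0)"
  define h where "h = f (1,t-2)"
  have m0: "(0,0) \<in> fst ?P" "(0,t-1) \<in> fst ?P" "(0,1) \<in> fst ?P" using mem0 t2 by auto
  have m1: "(1,0) \<in> fst ?P" "(1,t-2) \<in> fst ?P" using mem1 t2 by auto
  have eN: "e \<subseteq> {..<N}" using blue[OF mem2] e_def by simp
  have A0e: "\<not> A0 \<subseteq> e" using rel[OF m0(1) mem2] A0_def e_def by simp
  have ge: "\<not> g \<subseteq> e" using rel[OF m1(1) mem2] g_def e_def by simp
  have eZ: "\<not> e \<subseteq> Z" using rel[OF mem2 m0(2)] Z_def e_def by simp
  have A0h: "\<not> A0 \<subseteq> h" using rel[OF m0(1) m1(2)] A0_def h_def by simp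
  have eh: "\<not> e \<subseteq> h" using rel[OF mem2 m1(2)] h_def e_def by simp
  have gZ: "\<not> g \<subseteq> Z" using rel[OF m1(1) m0(2)] Z_def g_def by simp
  have ZN: "Z \<subseteq> {..<N}" using blue[OF m0(2)] Z_def by simp
  have ZneN: "Z \<noteq> {..<N}" using eZ eN by auto
  have cZ: "card Z < N" proof -
    have "card Z < card {..<N::nat}" using ZN ZneN by (intro psubset_card_mono) auto
    then show ?thesis by simp
  qed
  have A0ne: "A0 \<noteq> {}" using A0e by auto
  have cA0: "card A0 = 1"
  proof -
    have "card A0 \<noteq> 0" using A0ne fin[OF m0(1)] A0_def by simp
    moreover have "card A0 + (t-1) \<le> card Z" using cc0[of 0 "t-1"] t2 A0_def Z_def by simp
    moreover have "card A0 \<le> 1 \<or> n+2 \<le> card A0" using blue[OF m0(1)] A0_def by simp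
    ultimately show ?thesis using cZ NB t2 by linarith
  qed
  then obtain a where A0a: "A0 = {a}" using card_1_singletonE by blast
  have cZ2: "n + t \<le> card Z"
  proof -
    have "card A0 + 1 \<le> card (f (0,1))" using cc0[of 0 1] t2 A0_def by simp
    then have "n+2 \<le> card (f (0,1))" using blue[OF m0(3)] cA0 by linarith
    moreover have "card (f (0,1)) + (t-2) \<le> card Z"
    proof -
      have e: "1 + (t-2) = t - 1" using t2 by simp
      have "card (f (0,1)) + (t-2) \<le> card (f (0,1 + (t-2)))" using cc0[of 1 "t-2"] t2 by simp
      then show ?thesis unfolding e Z_def .
    qed
    ultimately show ?thesis using t2 by linarith
  qed
  obtain x where x: "x < N" "x \<notin> Z" using ZN ZneN by blast
  have Zx: "Z = {..<N} - {x}"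
  proof (rule card_seteq)
    show "finite ({..<N} - {x})" by simp
    show "Z \<subseteq> {..<N} - {x}" using ZN x by auto
    show "card ({..<N} - {x}) \<le> card Z" using x cZ2 NB by simp
  qed
  have ae: "a \<notin> e" using A0e A0a by auto
  have xe: "x \<in> e" using eZ eN Zx by auto
  have gN: "g \<subseteq> {..<N}" using blue[OF m1(1)] g_def by simp
  show False
  proof (cases "card g = 1")
    case True
    then obtain y where gy: "g = {y}" using card_1_singletonE by blast
    then have "y = x" using gZ gN Zx by auto
    then show False using ge gy xe by auto
  next
    case False
    have "g \<noteq> {}" using ge by auto
    then have "card g \<noteq> 0" using fin[OF m1(1)] g_def by simp
    then have "n+2 \<le> card g" using False blue[OF m1(1)] g_def by auto
    moreover have "card g + (t-2) \<le> card h" using cc1[of 0 "t-2"] t2 g_def h_def by simp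
    ultimately have ch: "n + t \<le> card h" using t2 by linarith
    have hN: "h \<subseteq> {..<N}" using blue[OF m1(2)] h_def by simp
    have ah: "a \<notin> h" using A0h A0a by auto
    have aN: "a < N" using A0a blue[OF m0(1)] A0_def by auto
    have "h = {..<N} - {a}"
    proof (rule card_seteq)
      show "finite ({..<N} - {a})" by simp
      show "h \<subseteq> {..<N} - {a}" using hN ah by auto
      show "card ({..<N} - {a}) \<le> card h" using aN ch NB by simp
    qed
    then show False using eh eN ae by auto
  qed
qed

theorem theorem6:
  fixes n t t' :: nat
  assumes "n \<ge> 1" and "t \<ge> 1" and "t' \<ge> 1" and "t - 1 \<ge> t'"
  shows "ramsey_num (chain_sum3 t (t - 1) t') (boolean_lattice n) = n + t + 2"
proof -
  have t2: "2 \<le> t" using assms by linarith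
  show ?thesis
    unfolding ramsey_num_def
  proof (rule Least_equality)
    show "\<forall>c. copy_in (chain_sum3 t (t-1) t') {A. A \<subseteq> {..<n+t+2} \<and> c A} \<or>
              copy_in (boolean_lattice n) {A. A \<subseteq> {..<n+t+2} \<and> \<not> c A}"
    proof
      fix c :: "nat set \<Rightarrow> bool"
      let ?R = "copy_in (boolean_lattice n) {A. A \<subseteq> {..<n+t+2} \<and> \<not> c A}"
      define m where "m = n + (t - 1)"
      have CL: "(\<exists>h. (\<forall>j<t. c (h j) \<and> {m+i} \<subseteq> h j \<and> h j \<subseteq> {m+i} \<union> {..<m}) \<and>
              (\<forall>j j'. j < j' \<and> j' < t \<longrightarrow> h j \<subset> h j')) \<or> ?R" if "i < 3" for i
        using chain_lemma[of "{m+i}" n "t-1" "n+t+2" c] that t2 unfolding m_def by auto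
      show "copy_in (chain_sum3 t (t-1) t') {A. A \<subseteq> {..<n+t+2} \<and> c A} \<or> ?R"
      proof (cases ?R)
        case True then show ?thesis by blast
      next
        case False
        have "\<forall>i\<in>{..<3}. \<exists>h. (\<forall>j<t. c (h j) \<and> {m+i} \<subseteq> h j \<and> h j \<subseteq> {m+i} \<union> {..<m}) \<and>
              (\<forall>j j'. j < j' \<and> j' < t \<longrightarrow> h j \<subset> h j')" using CL False by blast
        then obtain H where H: "\<forall>i\<in>{..<3}. (\<forall>j<t. c (H i j) \<and> {m+i} \<subseteq> H i j \<and> H i j \<subseteq> {m+i} \<union> {..<m}) \<and>
              (\<forall>j j'. j < j' \<and> j' < t \<longrightarrow> H i j \<subset> H i j')" by (rule bchoice[THEN exE]) blast
        have "copy_in (chain_sum3 t (t-1) t') {A. A \<subseteq> {..<n+t+2} \<and> c A}"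
        proof (rule chains_to_copy[where H = H and m = m])
          show "\<And>i j. i < 3 \<Longrightarrow> j < t \<Longrightarrow> c (H i j) \<and> {m+i} \<subseteq> H i j \<and> H i j \<subseteq> {m+i} \<union> {..<m}"
            using H by auto
          show "\<And>i j j'. i < 3 \<Longrightarrow> j < j' \<Longrightarrow> j' < t \<Longrightarrow> H i j \<subset> H i j'" using H by auto
          show "m + 3 \<le> n + t + 2" using t2 unfolding m_def by simp
          show "t' \<le> t" using assms by simp
        qed
        then show ?thesis by blast
      qed
    qed
  next
    fix y assume Py: "\<forall>c. copy_in (chain_sum3 t (t-1) t') {A. A \<subseteq> {..<y} \<and> c A} \<or>
              copy_in (boolean_lattice n) {A. A \<subseteq> {..<y} \<and> \<not> c A}"
    show "n + t + 2 \<le> y"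
    proof (rule ccontr)
      assume "\<not> n + t + 2 \<le> y"
      then have yb: "y \<le> n + t + 1" by simp
      from Py[rule_format, of "\<lambda>A. card A \<le> 1 \<or> n+2 \<le> card A"]
      show False using no_blue[OF yb t2, of t'] no_red[of n y] assms by blast
    qed
  qed
qed

end
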